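(* Let $q$ be a prime power, $n\ge 1$, and let $M$ be an $n\times n$ matrix with entries in $\mathbb{F}_{q^2}$ which is not of the form $c\,\mathbb{I}_{n\times n}$ for any $c\in\mathbb{F}_{q^2}$. Then $\sharp(\mathrm{Num}_0(M))\ge \lceil (q+1)/2\rceil$.
   Context: For $u=(u_1,\dots,u_n),v=(v_1,\dots,v_n)\in\mathbb{F}_{q^2}^n$ set $\langle u,v\rangle=\sum_{i=1}^n u_i^q v_i$ (the standard Hermitian form; note $\langle u,u\rangle\in\mathbb{F}_q$). For an $n\times n$ matrix $M$ over $\mathbb{F}_{q^2}$, $\mathrm{Num}_0(M)=\{\langle u,Mu\rangle : u\in\mathbb{F}_{q^2}^n,\ \langle u,u\rangle=0\}\subseteq\mathbb{F}_{q^2}$. $\mathbb{I}_{n\times n}$ is the identity matrix. *)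

theory Defs
  imports "HOL-Analysis.Analysis" "HOL-Computational_Algebra.Primes"
begin

definition herm :: "nat \<Rightarrow> ('a::field) ^ 'n \<Rightarrow> 'a ^ 'n \<Rightarrow> 'a" where
  "herm q u v = (\<Sum>i\<in>UNIV. (u $ i) ^ q * v $ i)"

definition Num0 :: "nat \<Rightarrow> ('a::field) ^ 'n ^ 'n \<Rightarrow> 'a set" where
  "Num0 q M = {herm q u (M *v u) | u. herm q u u = 0}"

end

theory Submission imports Defs "HOL-Computational_Algebra.Polynomial" begin

lemma ff_pow_card:
  fixes x :: "'a::{field,finite}"
  assumes "x \<noteq> 0"
  shows "x ^ (CARD('a) - 1) = 1"
proof -
  let ?U = "UNIV - {0::'a}"
  have img: "(\<lambda>y. x * y) ` ?U = ?U"
  proof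
    show "(\<lambda>y. x * y) ` ?U \<subseteq> ?U" using assms by auto
    show "?U \<subseteq> (\<lambda>y. x * y) ` ?U"
    proof
      fix z assume "z \<in> ?U"
      then have "z / x \<in> ?U" "z = x * (z / x)" using assms by auto
      then show "z \<in> (\<lambda>y. x * y) ` ?U" by blast
    qed
  qed
  have bij: "bij_betw (\<lambda>y. x * y) ?U ?U"
    unfolding bij_betw_def using img assms by (auto simp: inj_on_def)
  have "prod (\<lambda>y. x * y) ?U = prod id ?U"
    using prod.reindex_bij_betw[OF bij, of id] by simp
  moreover have "prod (\<lambda>y. x * y) ?U = x ^ card ?U * prod id ?U"
    by (simp add: prod.distrib)
  moreover have "prod id ?U \<noteq> 0" by simp
  moreover have "card ?U = CARD('a) - 1" by (simp add: card_Diff_subset)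
  ultimately show ?thesis by simp
qed

lemma ff_card_zero:
  shows "(of_nat CARD('a) :: 'a::{field,finite}) = 0"
proof -
  have bij: "bij_betw (\<lambda>y. y + 1) (UNIV::'a set) UNIV"
    unfolding bij_betw_def inj_on_def
    by (auto simp: image_iff intro!: exI[of _ "y - 1" for y])
  have "sum (\<lambda>y. y + 1) (UNIV::'a set) = sum id UNIV"
    using sum.reindex_bij_betw[OF bij, of id] by simp
  moreover have "sum (\<lambda>y. y + 1) (UNIV::'a set) = sum id UNIV + of_nat CARD('a)"
    by (simp add: sum.distrib)
  ultimately show ?thesis by simp
qed

lemma card_pow_eq:
  fixes c :: "'a::field"
  assumes "m \<ge> 1"
  shows "card {y. y ^ m = c} \<le> m"
proof -
  define p where "p = monom (1::'a) m + [:-c:]"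
  have dp: "degree p = m" unfolding p_def using assms
    by (subst degree_add_eq_left) (auto simp: degree_monom_eq)
  have "p \<noteq> 0" using dp assms by auto
  moreover have "{y. y ^ m = c} = {x. poly p x = 0}"
    by (auto simp: p_def poly_monom)
  ultimately show ?thesis using card_poly_roots_bound[of p] dp by simp
qed

lemma norm_count:
  assumes cq: "CARD('a::{field,finite}) = q^2" and q2: "q \<ge> 2"
  defines "T \<equiv> {c::'a. c \<noteq> 0 \<and> c^(q-1) = 1}"
  shows "card T \<ge> q - 1" and "\<forall>c\<in>T. card {y::'a. y^(q+1) = c} = q+1"
proof -
  define F where "F c = {y::'a. y^(q+1) = c}" for c
  let ?U = "UNIV - {0::'a}"
  have qq: "(q+1)*(q-1) = q^2 - 1" using q2 by (simp add: power2_eq_square algebra_simps)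
  have U: "?U = \<Union> (F ` T)"
  proof
    show "?U \<subseteq> \<Union> (F ` T)"
    proof
      fix y assume y: "y \<in> ?U"
      have "(y^(q+1))^(q-1) = y^(CARD('a) - 1)" unfolding power_mult[symmetric] qq cq ..
      also have "\<dots> = 1" using y ff_pow_card by auto
      finally have "y^(q+1) \<in> T" using y by (simp add: T_def)
      then show "y \<in> \<Union> (F ` T)" by (auto simp: F_def)
    qed
    show "\<Union> (F ` T) \<subseteq> ?U" by (auto simp: F_def T_def)
  qed
  have "card ?U = (\<Sum>c\<in>T. card (F c))"
    unfolding U by (rule card_UN_disjoint) (auto simp: F_def)
  moreover have "card ?U = (q+1)*(q-1)" using qq by (simp add: card_Diff_subset cq)
  ultimately have S: "(\<Sum>c\<in>T. card (F c)) = (q+1)*(q-1)" by simp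
  have Fb: "card (F c) \<le> q+1" for c unfolding F_def by (rule card_pow_eq) simp
  have "card T \<le> card {c::'a. c^(q-1) = 1}" by (rule card_mono) (auto simp: T_def)
  also have "\<dots> \<le> q - 1" by (rule card_pow_eq) (use q2 in simp)
  finally have Tb: "card T \<le> q - 1" .
  have "(\<Sum>c\<in>T. card (F c)) \<le> card T * (q+1)"
    using sum_bounded_above[of T "\<lambda>c. card (F c)" "q+1"] Fb by simp
  then have "(q+1)*(q-1) \<le> (q+1) * card T" using S by (simp add: mult.commute)
  then show "card T \<ge> q - 1" using mult_le_cancel1[of "q+1" "q-1" "card T"] by linarith
  show "\<forall>c\<in>T. card {y::'a. y^(q+1) = c} = q+1"
  proof (rule ccontr)
    assume "\<not> ?thesis"
    then obtain c0 where c0: "c0 \<in> T" "card (F c0) \<noteq> q+1" by (auto simp: F_def)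
    have lt: "card (F c0) < q+1" using Fb[of c0] c0(2) by linarith
    have "(\<Sum>c\<in>T. card (F c)) < (\<Sum>c\<in>T. q+1)"
      by (rule sum_strict_mono_ex1) (use Fb lt c0 in auto)
    also have "\<dots> = card T * (q+1)" by simp
    also have "\<dots> \<le> (q-1)*(q+1)" using Tb by (rule mult_right_mono) simp
    finally show False using S by (simp add: mult.commute)
  qed
qed

lemma sum_two:
  fixes f :: "'n::finite \<Rightarrow> 'a::comm_ring_1"
  assumes "i \<noteq> j" "\<forall>k. k \<noteq> i \<longrightarrow> k \<noteq> j \<longrightarrow> f k = 0"
  shows "(\<Sum>k\<in>UNIV. f k) = f i + f j"
proof -
  have "(\<lambda>k. f k) = (\<lambda>k. (if k = i then f i else 0) + (if k = j then f j else 0))"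
    using assms by (auto simp: fun_eq_iff)
  then have "(\<Sum>k\<in>UNIV. f k) = (\<Sum>k\<in>UNIV. (if k = i then f i else 0) + (if k = j then f j else 0))"
    by metis
  also have "\<dots> = f i + f j" by (simp add: sum.distrib)
  finally show ?thesis .
qed

lemma herm_two:
  fixes v :: "'a::field ^ 'n"
  assumes "i \<noteq> j" "q \<ge> 1"
  shows "herm q (\<chi> k. if k = i then a else if k = j then b else 0) v = a^q * v$i + b^q * v$j"
  unfolding herm_def using assms by (subst sum_two[of i j]) (auto simp: zero_power)

lemma mv_two:
  fixes M :: "'a::field ^ 'n ^ 'n"
  assumes "i \<noteq> j"
  shows "(M *v (\<chi> k. if k = i then a else if k = j then b else 0)) $ k = M$k$i * a + M$k$j * b"
  unfolding matrix_vector_mult_def using assms by (simp, subst sum_two[of i j]) auto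

lemma minus_one_pow:
  assumes "\<exists>p k. prime p \<and> k \<ge> 1 \<and> q = p ^ k" and cq: "CARD('a::{field,finite}) = q^2"
  shows "(-1::'a)^(q-1) = 1"
proof (cases "even q")
  case True
  obtain p k where pk: "prime p" "k \<ge> 1" "q = p ^ k" using assms by blast
  have "2 dvd p ^ k" using True pk by simp
  then have "2 dvd p" using prime_dvd_power[of 2 p k] by simp
  then have p2: "p = 2" using pk(1) unfolding prime_nat_iff by force
  have "(of_nat (q^2) :: 'a) = 0" using ff_card_zero[where 'a='a] cq by simp
  then have "(2::'a) ^ (2*k) = 0" using pk p2 by (simp add: power_mult[symmetric] mult.commute)
  then have "(2::'a) = 0" by simp
  then have m: "(-1::'a) = 1" by (metis add_eq_0_iff2 one_add_one)
  show ?thesis unfolding m by simp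
next
  case False
  then have "even (q - 1)" by simp
  then show ?thesis by simp
qed

lemma offdiag:
  fixes M :: "'a::field ^'n^'n"
  assumes q2: "q \<ge> 2" and S: "card {y::'a. y^(q+1) = -1} = q+1"
    and Z: "\<forall>u. herm q u u = 0 \<longrightarrow> herm q u (M *v u) = 0"
    and ij: "i \<noteq> j"
  shows "M$i$j = 0 \<and> M$j$i = 0 \<and> M$i$i = M$j$j"
proof -
  define p where "p = [:M$i$i - M$j$j, M$i$j:] + monom (M$j$i) q"
  have root: "poly p y = 0" if y: "y^(q+1) = -1" for y
  proof -
    define u :: "'a^'n" where "u = (\<chi> k. if k = i then 1 else if k = j then y else 0)"
    have yy: "y^q * y = -1" using y by (simp add: mult.commute)
    have "herm q u u = 1 + y^q * y" unfolding u_def using ij q2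
      by (subst herm_two) auto
    then have "herm q u u = 0" using yy by simp
    then have "herm q u (M *v u) = 0" using Z by blast
    moreover have "herm q u (M *v u) = (M$i$i + M$i$j*y) + y^q*(M$j$i + M$j$j*y)"
      unfolding u_def using ij q2 by (subst herm_two) (auto simp: mv_two)
    ultimately have E: "(M$i$i + M$i$j*y) + y^q*(M$j$i + M$j$j*y) = 0" by simp
    have "poly p y = (M$i$i + M$i$j*y) + y^q*(M$j$i) + (-1)*M$j$j"
      by (simp add: p_def poly_monom algebra_simps)
    also have "\<dots> = (M$i$i + M$i$j*y) + y^q*(M$j$i + M$j$j*y)"
      unfolding yy[symmetric] by (simp add: algebra_simps)
    finally show ?thesis using E by simp
  qed
  have dp: "degree p \<le> q"
    unfolding p_def using q2
    by (intro degree_add_le) (auto simp: degree_monom_le intro: order_trans[OF degree_pCons_le])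
  have p0: "p = 0"
  proof (rule ccontr)
    assume "p \<noteq> 0"
    then have "card {x. poly p x = 0} \<le> q" using card_poly_roots_bound[of p] dp by simp
    moreover have "card {y::'a. y^(q+1) = -1} \<le> card {x. poly p x = 0}"
    proof (rule card_mono)
      show "finite {x. poly p x = 0}" using poly_roots_finite \<open>p \<noteq> 0\<close> by blast
    qed (use root in auto)
    ultimately show False using S by simp
  qed
  have c0: "coeff p 0 = M$i$i - M$j$j" using q2 by (simp add: p_def)
  have c1: "coeff p 1 = M$i$j" using q2 by (simp add: p_def coeff_monom)
  have cq: "coeff p q = M$j$i" using q2 by (simp add: p_def coeff_monom coeff_pCons split: nat.split)
  show ?thesis using c0 c1 cq p0 by simp
qed

lemma herm_scale:
  fixes M :: "'a::field ^'n^'n"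
  shows "herm q (c *s u) (M *v (c *s u)) = c^(q+1) * herm q u (M *v u)"
    and "herm q (c *s u) (c *s u) = c^(q+1) * herm q u u"
  by (simp_all add: herm_def matrix_vector_mult_def sum_distrib_left power_mult_distrib mult_ac)

theorem corollary1:
  fixes M :: "('a::{field,finite}) ^ 'n ^ 'n" and q :: nat
  assumes "\<exists>p k. prime p \<and> k \<ge> 1 \<and> q = p ^ k"
    and "CARD('a) = q ^ 2"
    and "\<forall>c. M \<noteq> mat c"
  shows "of_nat (card (Num0 q M)) \<ge> \<lceil>(real q + 1) / 2\<rceil>"
proof -
  obtain p k where pk: "prime p" "k \<ge> 1" "q = p ^ k" using assms(1) by blast
  have "p \<ge> 2" using pk(1) prime_ge_2_nat by blast
  then have "p ^ 1 \<le> p ^ k" using pk(2) by (intro power_increasing) auto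
  then have q2: "q \<ge> 2" using pk \<open>p \<ge> 2\<close> by simp
  define T where "T = {c::'a. c \<noteq> 0 \<and> c^(q-1) = 1}"
  have cT: "card T \<ge> q - 1" and fib: "\<forall>c\<in>T. card {y::'a. y^(q+1) = c} = q+1"
    using norm_count[OF assms(2) q2] unfolding T_def by auto
  have "(-1::'a) \<in> T" using minus_one_pow[OF assms(1,2)] by (simp add: T_def)
  then have S: "card {y::'a. y^(q+1) = -1} = q+1" using fib by blast
  obtain u where u: "herm q u u = 0" "herm q u (M *v u) \<noteq> 0"
  proof (rule ccontr)
    assume "\<not> thesis"
    then have Z: "\<forall>u. herm q u u = 0 \<longrightarrow> herm q u (M *v u) = 0" using that by blast
    define i0 :: 'n where "i0 = undefined"
    have e: "M $ i $ j = (if i = j then M $ i0 $ i0 else 0)" for i j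
      proof (cases "i = j")
        case True
        then show ?thesis using offdiag[OF q2 S Z, of i i0] by (cases "i = i0") auto
      next
        case False
        then show ?thesis using offdiag[OF q2 S Z, of i j] by auto
      qed
    have "M = mat (M$i0$i0)" unfolding vec_eq_iff mat_def using e by simp
    then show False using assms(3) by blast
  qed
  define a where "a = herm q u (M *v u)"
  have sub: "(\<lambda>c. c * a) ` insert 0 T \<subseteq> Num0 q M"
  proof
    fix z assume "z \<in> (\<lambda>c. c * a) ` insert 0 T"
    then obtain c where c: "c \<in> insert 0 T" "z = c * a" by blast
    have "\<exists>l. l^(q+1) = c"
    proof (cases "c = 0")
      case True then show ?thesis by (intro exI[of _ 0]) simp
    next
      case False
      then have "card {y::'a. y^(q+1) = c} = q+1" using fib c by auto
      then have "{y::'a. y^(q+1) = c} \<noteq> {}" by (intro notI) simp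
      then show ?thesis by blast
    qed
    then obtain l where l: "l^(q+1) = c" by blast
    have "herm q (l *s u) (l *s u) = 0" using u(1) by (simp add: herm_scale)
    moreover have "herm q (l *s u) (M *v (l *s u)) = z" using l c by (simp add: herm_scale a_def)
    ultimately show "z \<in> Num0 q M" unfolding Num0_def by blast
  qed
  have "0 \<notin> T" by (simp add: T_def)
  have inj: "inj_on (\<lambda>c. c * a) (insert 0 T)" using u(2) unfolding a_def inj_on_def by auto
  have "q \<le> card (insert 0 T)" using cT \<open>0 \<notin> T\<close> q2 by simp
  also have "\<dots> = card ((\<lambda>c. c * a) ` insert 0 T)" using card_image[OF inj] by simp
  also have "\<dots> \<le> card (Num0 q M)" by (rule card_mono[OF finite sub])
  finally have qc: "q \<le> card (Num0 q M)" .
  have "\<lceil>(real q + 1) / 2\<rceil> \<le> int q" using q2 by (simp add: ceiling_le_iff)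
  then show ?thesis using qc by linarith
qed

end
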